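(* If there exists an $(N,NK,M,R)$ $\mathcal D_{(K,K,\dots,K)}$-non-private scheme, then there exists an $(N,K,M,R)$-private scheme.
   Context: Files $W_0,\dots,W_{N-1}$ independent, each uniform on $[2^F]=\{0,\dots,2^F-1\}$, $\bar W=(W_0,\dots,W_{N-1})$; $[n]=\{0,\dots,n-1\}$. Non-private scheme for $N$ files and $L$ users with memory $M$ and rate $R$: cache encoders $C_j:[2^F]^N\to[2^{MF}]$, transmission encoder $E:[2^F]^N\times[N]^L\to[2^{RF}]$ (the demand vector is also transmitted), decoders $G_j$ with $W_{d_j}=G_j(\bar d,E(\bar W,\bar d),C_j(\bar W))$. For $\mathcal D\subseteq[N]^L$, a $\mathcal D$-non-private scheme is one satisfying this decoding condition for all $\bar W$ and all $\bar d\in\mathcal D$. For a demand vector $\bar d\in[N]^L$, its type is $(t_0,\dots,t_{N-1})$ where $t_i$ is the number of users requesting file $i$; $\mathcal D_{\bar t}$ denotes the set of demand vectors of type $\bar t$. Here $L=NK$ and $\mathcal D_{(K,\dots,K)}$ is the set of demand vectors in which every file is requested by exactly $K$ users. Private scheme $(N,K,M,R)$: $K$ users with independent uniform demands $D_k\in[N]$, $\bar D=(D_0,\dots,D_{K-1})$, $\tilde D_k$ = all demands except $D_k$; user $k$ shares a key $S_k$ (finite alphabet) with the server, server private randomness $P$ (finite alphabet), all of $P$, $S_k$, $D_k$, $W_i$ mutually independent; cache $Z_k=(C_k(S_k,P,\bar W),S_k)$ with $C_k$ valued in $[2^{MF}]$; broadcast $X=(E(\bar W,\bar D,P,\bar S),J(\bar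 D,P,\bar S))$ with $E$ valued in $[2^{RF}]$ and $J$ valued in a finite set whose $\log_2$-size is negligible compared to $F$; user $k$ recovers $W_{D_k}$ exactly from $(D_k,S_k,X,Z_k)$; and $I(\tilde D_k;Z_k,X,D_k)=0$ for all $k$. *)

theory Defs
  imports "HOL-Probability.Probability"
begin

definition file_vectors :: "nat \<Rightarrow> nat \<Rightarrow> (nat \<Rightarrow> nat) set" where
  "file_vectors N F = PiE {..<N} (\<lambda>_. {..<2 ^ F})"

definition demand_vectors :: "nat \<Rightarrow> nat \<Rightarrow> (nat \<Rightarrow> nat) set" where
  "demand_vectors N L = PiE {..<L} (\<lambda>_. {..<N})"

definition demand_type_set :: "nat \<Rightarrow> nat \<Rightarrow> (nat \<Rightarrow> nat) \<Rightarrow> (nat \<Rightarrow> nat) set" where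
  "demand_type_set N L t =
     {d \<in> demand_vectors N L. \<forall>i<N. card {j \<in> {..<L}. d j = i} = t i}"

definition nonprivate_scheme ::
  "nat \<Rightarrow> nat \<Rightarrow> real \<Rightarrow> real \<Rightarrow> nat \<Rightarrow> (nat \<Rightarrow> nat) set \<Rightarrow> bool" where
  "nonprivate_scheme N L M R F D \<longleftrightarrow>
    (\<exists>(C :: nat \<Rightarrow> (nat \<Rightarrow> nat) \<Rightarrow> nat)
      (E :: (nat \<Rightarrow> nat) \<Rightarrow> (nat \<Rightarrow> nat) \<Rightarrow> nat)
      (G :: nat \<Rightarrow> (nat \<Rightarrow> nat) \<Rightarrow> nat \<Rightarrow> nat \<Rightarrow> nat).
       (\<forall>j<L. \<forall>W\<in>file_vectors N F. real (C j W) < 2 powr (M * real F)) \<and>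
       (\<forall>W\<in>file_vectors N F. \<forall>d\<in>demand_vectors N L. real (E W d) < 2 powr (R * real F)) \<and>
       (\<forall>W\<in>file_vectors N F. \<forall>d\<in>D \<inter> demand_vectors N L. \<forall>j<L.
          G j d (E W d) (C j W) = W (d j)))"

definition mutual_info :: "'a pmf \<Rightarrow> ('a \<Rightarrow> 'b) \<Rightarrow> ('a \<Rightarrow> 'c) \<Rightarrow> real" where
  "mutual_info \<Omega> X Y =
    (let PXY = map_pmf (\<lambda>\<omega>. (X \<omega>, Y \<omega>)) \<Omega>; PX = map_pmf X \<Omega>; PY = map_pmf Y \<Omega>
     in \<Sum>z\<in>set_pmf PXY. pmf PXY z * log 2 (pmf PXY z / (pmf PX (fst z) * pmf PY (snd z))))"

text \<open>An outcome is
  (D, S, P, W): demand vector D (D_k uniform on [N], k<K), key vector S (S_k ~ pS k),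
  server randomness P ~ pP, files W (W_i uniform on [2^F], i<N); all mutually independent.\<close>
definition private_space ::
  "nat \<Rightarrow> nat \<Rightarrow> nat \<Rightarrow> (nat \<Rightarrow> nat pmf) \<Rightarrow> nat pmf
     \<Rightarrow> ((nat \<Rightarrow> nat) \<times> (nat \<Rightarrow> nat) \<times> nat \<times> (nat \<Rightarrow> nat)) pmf" where
  "private_space N K F pS pP =
     pair_pmf (Pi_pmf {..<K} 0 (\<lambda>_. pmf_of_set {..<N}))
       (pair_pmf (Pi_pmf {..<K} 0 pS)
         (pair_pmf pP (Pi_pmf {..<N} 0 (\<lambda>_. pmf_of_set {..<2 ^ F}))))"

text \<open>An (N,K,M,R)-private scheme with file size F, where the auxiliary transmission J takes
  values in [B].\<close>
definition private_scheme ::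
  "nat \<Rightarrow> nat \<Rightarrow> real \<Rightarrow> real \<Rightarrow> nat \<Rightarrow> nat \<Rightarrow> bool" where
  "private_scheme N K M R F B \<longleftrightarrow>
    (\<exists>(pS :: nat \<Rightarrow> nat pmf) (pP :: nat pmf)
      (C :: nat \<Rightarrow> nat \<Rightarrow> nat \<Rightarrow> (nat \<Rightarrow> nat) \<Rightarrow> nat)
      (E :: (nat \<Rightarrow> nat) \<Rightarrow> (nat \<Rightarrow> nat) \<Rightarrow> nat \<Rightarrow> (nat \<Rightarrow> nat) \<Rightarrow> nat)
      (J :: (nat \<Rightarrow> nat) \<Rightarrow> nat \<Rightarrow> (nat \<Rightarrow> nat) \<Rightarrow> nat)
      (Dec :: nat \<Rightarrow> nat \<Rightarrow> nat \<Rightarrow> nat \<times> nat \<Rightarrow> nat \<times> nat \<Rightarrow> nat).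
      (\<forall>k<K. finite (set_pmf (pS k))) \<and> finite (set_pmf pP) \<and>
      (let \<Omega> = private_space N K F pS pP;
           X = (\<lambda>(d, s, p, w). (E w d p s, J d p s));
           Z = (\<lambda>k (d, s, p, w). (C k (s k) p w, s k))
       in
        (\<forall>k<K. \<forall>(d, s, p, w)\<in>set_pmf \<Omega>. real (C k (s k) p w) < 2 powr (M * real F)) \<and>
        (\<forall>(d, s, p, w)\<in>set_pmf \<Omega>. real (E w d p s) < 2 powr (R * real F) \<and> J d p s < B) \<and>
        (\<forall>k<K. \<forall>\<omega>\<in>set_pmf \<Omega>. case \<omega> of (d, s, p, w) \<Rightarrow>
            Dec k (d k) (s k) (X \<omega>) (Z k \<omega>) = w (d k)) \<and>
        (\<forall>k<K. mutual_info \<Omega>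
            (\<lambda>(d, s, p, w). restrict d ({..<K} - {k}))
            (\<lambda>\<omega>. (Z k \<omega>, X \<omega>, fst \<omega> k)) = 0)))"

end

theory Submission
  imports Defs
begin


lemma mod_lt2: "(x::nat) < 2 * N \<Longrightarrow> x mod N = (if x < N then x else x - N)"
  by (metis le_mod_geq less_diff_conv2 mod_less mult_2 not_less)

lemma sub_inv: "(c::nat) < N \<Longrightarrow> x < N \<Longrightarrow> (c + N - (c + N - x) mod N) mod N = x"
proof -
  assume a: "c < N" "x < N"
  have "(c + N - x) mod N = (if c + N - x < N then c + N - x else c + N - x - N)"
    using a by (intro mod_lt2) auto
  then show ?thesis using a by (auto simp: mod_lt2)
qed

lemma add_inv: "(c::nat) < N \<Longrightarrow> n < N \<Longrightarrow> i < N \<Longrightarrow>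
   ((n + c) mod N = i) = (n = (i + N - c) mod N)"
  by (auto simp: mod_lt2)

lemma mi_zero:
  assumes "map_pmf (\<lambda>\<omega>. (X \<omega>, Y \<omega>)) \<Omega> = pair_pmf P Q"
  shows "mutual_info \<Omega> X Y = 0"
proof -
  have PX: "map_pmf X \<Omega> = P"
    using arg_cong[OF assms, of "map_pmf fst"] by (simp add: pmf.map_comp o_def map_fst_pair_pmf)
  have PY: "map_pmf Y \<Omega> = Q"
    using arg_cong[OF assms, of "map_pmf snd"] by (simp add: pmf.map_comp o_def map_snd_pair_pmf)
  show ?thesis unfolding mutual_info_def Let_def assms PX PY
  proof (intro sum.neutral ballI)
    fix z assume z: "z \<in> set_pmf (pair_pmf P Q)"
    obtain a b where zab: "z = (a, b)" by force
    have "a \<in> set_pmf P" "b \<in> set_pmf Q" using z zab by auto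
    hence "pmf P a > 0" "pmf Q b > 0" by (auto simp: pmf_positive)
    then show "pmf (pair_pmf P Q) z * log 2 (pmf (pair_pmf P Q) z / (pmf P (fst z) * pmf Q (snd z))) = 0"
      by (simp add: zab pmf_pair)
  qed
qed


lemma split_Pi:
  assumes "finite A" "k \<notin> A"
  shows "bind_pmf (Pi_pmf (insert k A) dflt p) (\<lambda>d. map_pmf (\<lambda>y. (restrict d A, y)) (\<Psi> (d k)))
       = pair_pmf (map_pmf (\<lambda>f. restrict f A) (Pi_pmf A dflt p)) (bind_pmf (p k) \<Psi>)"
proof -
  have r: "restrict (f(k := y)) A = restrict f A" for f y using assms(2)
    by (auto simp: restrict_def fun_eq_iff)
  have "bind_pmf (Pi_pmf (insert k A) dflt p) (\<lambda>d. map_pmf (\<lambda>y. (restrict d A, y)) (\<Psi> (d k)))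
    = bind_pmf (pair_pmf (p k) (Pi_pmf A dflt p)) (\<lambda>(y, f). map_pmf (\<lambda>z. (restrict f A, z)) (\<Psi> y))"
    by (simp add: Pi_pmf_insert[OF assms] bind_map_pmf r case_prod_beta' o_def)
  also have "\<dots> = bind_pmf (p k) (\<lambda>y. bind_pmf (Pi_pmf A dflt p) (\<lambda>f. map_pmf (\<lambda>z. (restrict f A, z)) (\<Psi> y)))"
    by (simp add: pair_pmf_def bind_assoc_pmf bind_return_pmf)
  also have "\<dots> = bind_pmf (Pi_pmf A dflt p) (\<lambda>f. bind_pmf (p k) (\<lambda>y. map_pmf (\<lambda>z. (restrict f A, z)) (\<Psi> y)))"
    by (rule bind_commute_pmf)
  also have "\<dots> = bind_pmf (Pi_pmf A dflt p) (\<lambda>f. map_pmf (\<lambda>z. (restrict f A, z)) (bind_pmf (p k) \<Psi>))"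
    by (simp add: map_bind_pmf)
  also have "\<dots> = pair_pmf (map_pmf (\<lambda>f. restrict f A) (Pi_pmf A dflt p)) (bind_pmf (p k) \<Psi>)"
    by (simp add: pair_pmf_def bind_map_pmf map_pmf_def bind_assoc_pmf bind_return_pmf)
  finally show ?thesis .
qed


definition tvec :: "nat \<Rightarrow> nat \<Rightarrow> (nat \<Rightarrow> nat) \<Rightarrow> (nat \<Rightarrow> nat) \<Rightarrow> (nat \<Rightarrow> nat)" where
  "tvec N K d s = restrict (\<lambda>j. (d j + N - s j) mod N) {..<K}"

definition sig :: "nat \<Rightarrow> nat \<Rightarrow> nat \<Rightarrow> (nat \<Rightarrow> nat) \<Rightarrow> (nat \<Rightarrow> nat) \<Rightarrow> (nat \<Rightarrow> nat)" where
  "sig N K k d s = (\<lambda>j. if j < K then (if j = k then s j else (d j + N - s j) mod N) else 0)"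

definition tau :: "nat \<Rightarrow> nat \<Rightarrow> nat \<Rightarrow> nat \<Rightarrow> (nat \<Rightarrow> nat) \<Rightarrow> (nat \<Rightarrow> nat)" where
  "tau N K k a s = restrict (\<lambda>j. if j = k then (a + N - s j) mod N else s j) {..<K}"

lemma sig_in: "N \<ge> 1 \<Longrightarrow> s \<in> PiE_dflt {..<K} 0 (\<lambda>_. {..<N}) \<Longrightarrow> sig N K k d s \<in> PiE_dflt {..<K} 0 (\<lambda>_. {..<N})"
  by (auto simp: PiE_dflt_def sig_def)

lemma sig_sig: "d \<in> PiE_dflt {..<K} 0 (\<lambda>_. {..<N}) \<Longrightarrow> s \<in> PiE_dflt {..<K} 0 (\<lambda>_. {..<N}) \<Longrightarrow>
    sig N K k d (sig N K k d s) = s"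
  by (auto simp: PiE_dflt_def sig_def fun_eq_iff sub_inv)

lemma sig_map:
  assumes "N \<ge> 1" "d \<in> PiE_dflt {..<K} 0 (\<lambda>_. {..<N})"
  shows "map_pmf (sig N K k d) (Pi_pmf {..<K} 0 (\<lambda>_. pmf_of_set {..<N})) = Pi_pmf {..<K} 0 (\<lambda>_. pmf_of_set {..<N})"
proof -
  have e: "Pi_pmf {..<K} 0 (\<lambda>_. pmf_of_set {..<N}) = pmf_of_set (PiE_dflt {..<K} 0 (\<lambda>_. {..<N}))"
    using assms by (intro Pi_pmf_of_set) (auto simp: lessThan_empty_iff)
  have ne: "PiE_dflt {..<K} 0 (\<lambda>_. {..<N}) \<noteq> {}" using assms by (simp add: lessThan_empty_iff)
  have fin: "finite (PiE_dflt {..<K} 0 (\<lambda>_. {..<N}))" by (intro finite_PiE_dflt) auto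
  show ?thesis unfolding e
    by (intro map_pmf_of_set_bij_betw ne fin bij_betw_byWitness[where f'="sig N K k d"])
       (use assms sig_sig sig_in in auto)
qed

lemma tvec_sig: "k < K \<Longrightarrow> d \<in> PiE_dflt {..<K} 0 (\<lambda>_. {..<N}) \<Longrightarrow> s \<in> PiE_dflt {..<K} 0 (\<lambda>_. {..<N}) \<Longrightarrow>
   tvec N K d (sig N K k d s) = tau N K k (d k) s"
  by (auto simp: PiE_dflt_def sig_def tvec_def tau_def fun_eq_iff sub_inv)

lemma indep_main:
  assumes "k < K" "N \<ge> 1"
  shows "\<exists>P Q. map_pmf (\<lambda>(d, s, p, w). (restrict d ({..<K} - {k}), \<Phi> w (s k) (d k) (tvec N K d s)))
      (private_space N K F (\<lambda>_. pmf_of_set {..<N}) (return_pmf 0)) = pair_pmf P Q"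
proof -
  define U where "U = pmf_of_set {..<N::nat}"
  define DP where "DP = Pi_pmf {..<K} (0::nat) (\<lambda>_. U)"
  define R where "R = pair_pmf (return_pmf (0::nat)) (Pi_pmf {..<N} (0::nat) (\<lambda>_. pmf_of_set {..<(2::nat) ^ F}))"
  define A' where "A' = {..<K} - {k}"
  define \<Theta> where "\<Theta> d = map_pmf (\<lambda>(s, p, w). \<Phi> w (s k) (d k) (tvec N K d s)) (pair_pmf DP R)" for d
  define \<Psi> where "\<Psi> a = map_pmf (\<lambda>(s, p, w). \<Phi> w (s k) a (tau N K k a s)) (pair_pmf DP R)" for a
  have setDP: "set_pmf DP = PiE_dflt {..<K} 0 (\<lambda>_. {..<N})"
    using assms by (simp add: DP_def U_def set_Pi_pmf o_def lessThan_empty_iff)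
  have "map_pmf (\<lambda>(d, s, p, w). (restrict d A', \<Phi> w (s k) (d k) (tvec N K d s)))
      (private_space N K F (\<lambda>_. pmf_of_set {..<N}) (return_pmf 0))
      = bind_pmf DP (\<lambda>d. map_pmf (\<lambda>y. (restrict d A', y)) (\<Theta> d))"
    unfolding private_space_def \<Theta>_def DP_def[symmetric] R_def[symmetric] U_def[symmetric]
    by (simp add: pair_pmf_def map_pmf_def bind_assoc_pmf bind_return_pmf case_prod_beta')
  also have "\<dots> = bind_pmf DP (\<lambda>d. map_pmf (\<lambda>y. (restrict d A', y)) (\<Psi> (d k)))"
  proof (intro bind_pmf_cong refl arg_cong[where f="map_pmf _"])
    fix d assume d: "d \<in> set_pmf DP"
    have "pair_pmf DP R = pair_pmf (map_pmf (sig N K k d) DP) R"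
      using sig_map[OF assms(2), of d K k] d setDP by (simp add: DP_def U_def)
    also have "\<dots> = map_pmf (apfst (sig N K k d)) (pair_pmf DP R)" by (rule pair_map_pmf1)
    finally have e: "pair_pmf DP R = map_pmf (apfst (sig N K k d)) (pair_pmf DP R)" .
    show "\<Theta> d = \<Psi> (d k)"
      unfolding \<Theta>_def \<Psi>_def
      apply (subst e)
      apply (simp add: pmf.map_comp o_def)
      apply (intro map_pmf_cong refl)
      using d setDP assms(1) by (auto simp: tvec_sig[symmetric]) (simp add: sig_def)
  qed
  also have "\<dots> = pair_pmf (map_pmf (\<lambda>f. restrict f A') (Pi_pmf A' 0 (\<lambda>_. U))) (bind_pmf U \<Psi>)"
  proof -
    have "{..<K} = insert k A'" using assms(1) by (auto simp: A'_def)
    then show ?thesis unfolding DP_def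
      by (simp only:) (rule split_Pi, auto simp: A'_def)
  qed
  finally show ?thesis unfolding A'_def by blast
qed


definition dv :: "nat \<Rightarrow> nat \<Rightarrow> (nat \<Rightarrow> nat) \<Rightarrow> (nat \<Rightarrow> nat)" where
  "dv N K t = restrict (\<lambda>v. (v div K + t (v mod K)) mod N) {..<N * K}"

lemma dec_arith: "(c::nat) < N \<Longrightarrow> x < N \<Longrightarrow> (c + (x + N - c) mod N) mod N = x"
  by (auto simp: mod_lt2)

lemma idx_lt: "(n::nat) < N \<Longrightarrow> k < K \<Longrightarrow> n * K + k < N * K"
proof -
  assume "n < N" "k < K"
  then have "n * K + k < n * K + K" by simp
  also have "\<dots> = Suc n * K" by simp
  also have "\<dots> \<le> N * K" using \<open>n < N\<close> by (intro mult_right_mono) auto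
  finally show ?thesis .
qed

lemma dv_type:
  assumes N: "N \<ge> 1" and K: "K \<ge> 1" and t: "\<And>j. j < K \<Longrightarrow> t j < N"
  shows "dv N K t \<in> demand_type_set N (N * K) (\<lambda>_. K)"
proof -
  have "dv N K t \<in> demand_vectors N (N * K)"
    using N by (auto simp: demand_vectors_def dv_def)
  moreover have "card {j \<in> {..<N * K}. dv N K t j = i} = K" if i: "i < N" for i
  proof -
    define S where "S = {j \<in> {..<N * K}. dv N K t j = i}"
    define g where "g k = ((i + N - t k) mod N) * K + k" for k
    have divK: "v div K < N" if "v < N * K" for v
      using that by (simp add: less_mult_imp_div_less)
    have "bij_betw (\<lambda>v. v mod K) S {..<K}"
    proof (rule bij_betw_byWitness[where f'=g])
      show "\<forall>v\<in>S. g (v mod K) = v"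
      proof
        fix v assume v: "v \<in> S"
        then have v1: "v < N * K" and v2: "(v div K + t (v mod K)) mod N = i"
          by (auto simp: S_def dv_def)
        have tv: "t (v mod K) < N" using t K by simp
        have "v div K = (i + N - t (v mod K)) mod N"
          using add_inv[OF tv divK[OF v1] i] v2 by simp
        then show "g (v mod K) = v" unfolding g_def by (metis div_mult_mod_eq)
      qed
      show "\<forall>k\<in>{..<K}. g k mod K = k" by (auto simp: g_def)
      show "(\<lambda>v. v mod K) ` S \<subseteq> {..<K}" using K by auto
      show "g ` {..<K} \<subseteq> S"
      proof
        fix x assume "x \<in> g ` {..<K}"
        then obtain k where k: "k < K" and x: "x = g k" by auto
        have n: "(i + N - t k) mod N < N" using N by simp
        have xl: "x < N * K" unfolding x g_def by (rule idx_lt[OF n k])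
        have xd: "x div K = (i + N - t k) mod N" "x mod K = k" using k by (auto simp: x g_def)
        have "(x div K + t (x mod K)) mod N = i" unfolding xd
          using add_inv[OF t[OF k] n i] by simp
        then show "x \<in> S" using xl xd by (auto simp: S_def dv_def)
      qed
    qed
    then show ?thesis unfolding S_def[symmetric] by (simp add: bij_betw_same_card)
  qed
  ultimately show ?thesis by (auto simp: demand_type_set_def)
qed



lemma support_private:
  assumes "N \<ge> 1" "x \<in> set_pmf (private_space N K F (\<lambda>_. pmf_of_set {..<N}) (return_pmf 0))"
  shows "fst x \<in> PiE_dflt {..<K} 0 (\<lambda>_. {..<N}) \<and> fst (snd x) \<in> PiE_dflt {..<K} 0 (\<lambda>_. {..<N})
    \<and> snd (snd (snd x)) \<in> PiE_dflt {..<N} 0 (\<lambda>_. {..<2 ^ F})"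
  using assms by (auto simp: private_space_def set_Pi_pmf o_def lessThan_empty_iff)

theorem corollary1:
  fixes N K :: nat and M R :: real
  assumes "N \<ge> 1" and "K \<ge> 1"
  shows "\<exists>B::nat. \<forall>F::nat.
           nonprivate_scheme N (N * K) M R F (demand_type_set N (N * K) (\<lambda>_. K)) \<longrightarrow>
           private_scheme N K M R F B"
proof -
  define DV where "DV = demand_vectors N K"
  have finDV: "finite DV" by (simp add: DV_def demand_vectors_def finite_PiE)
  obtain h where h: "bij_betw h DV {0..<card DV}" using ex_bij_betw_finite_nat[OF finDV] by blast
  show ?thesis
  proof (intro exI allI impI)
    fix F :: nat
    assume "nonprivate_scheme N (N * K) M R F (demand_type_set N (N * K) (\<lambda>_. K))"
    then obtain C0 E0 G where
      C0: "\<forall>j<N * K. \<forall>W\<in>file_vectors N F. real (C0 j W) < 2 powr (M * real F)" and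
      E0: "\<forall>W\<in>file_vectors N F. \<forall>d\<in>demand_vectors N (N * K). real (E0 W d) < 2 powr (R * real F)" and
      G: "\<forall>W\<in>file_vectors N F. \<forall>d\<in>demand_type_set N (N * K) (\<lambda>_. K) \<inter> demand_vectors N (N * K). \<forall>j<N * K.
          G j d (E0 W d) (C0 j W) = W (d j)"
      unfolding nonprivate_scheme_def by blast
    define pS :: "nat \<Rightarrow> nat pmf" where "pS = (\<lambda>_. pmf_of_set {..<N})"
    define pP :: "nat pmf" where "pP = return_pmf 0"
    define C where "C = (\<lambda>(k::nat) (sk::nat) (p::nat) (w::nat \<Rightarrow> nat). C0 (sk * K + k) (restrict w {..<N}))"
    define E where "E = (\<lambda>(w::nat \<Rightarrow> nat) d (p::nat) s. E0 (restrict w {..<N}) (dv N K (tvec N K d s)))"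
    define J where "J = (\<lambda>d (p::nat) s. h (tvec N K d s))"
    define Dec where "Dec = (\<lambda>(k::nat) (dk::nat) (sk::nat) (x::nat \<times> nat) (z::nat \<times> nat).
       G (sk * K + k) (dv N K (inv_into DV h (snd x))) (fst x) (fst z))"
    define \<Omega> where "\<Omega> = private_space N K F pS pP"
    have supp: "d \<in> PiE_dflt {..<K} 0 (\<lambda>_. {..<N}) \<and> s \<in> PiE_dflt {..<K} 0 (\<lambda>_. {..<N})
       \<and> w \<in> PiE_dflt {..<N} 0 (\<lambda>_. {..<2 ^ F})" if "(d, s, p, w) \<in> set_pmf \<Omega>" for d s p w
      using support_private[OF assms(1) that[unfolded \<Omega>_def pS_def pP_def]] by simp
    have wfv: "restrict w {..<N} \<in> file_vectors N F" if "w \<in> PiE_dflt {..<N} 0 (\<lambda>_. {..<2 ^ F})" for w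
      using that by (auto simp: file_vectors_def PiE_dflt_def)
    have tDV: "tvec N K d s \<in> DV" if "d \<in> PiE_dflt {..<K} 0 (\<lambda>_. {..<N})" for d s
      using that assms by (auto simp: DV_def demand_vectors_def tvec_def PiE_dflt_def)
    have tlt: "tvec N K d s j < N" if "j < K" for d s j
      using that assms by (auto simp: tvec_def)
    have dvv: "dv N K t \<in> demand_vectors N (N * K)" for t
      using assms by (auto simp: demand_vectors_def dv_def)
    have c1: "\<forall>k<K. \<forall>(d, s, p, w)\<in>set_pmf \<Omega>. real (C k (s k) p w) < 2 powr (M * real F)"
    proof (intro allI impI ballI, clarify)
      fix k d s p w assume k: "k < K" and om: "(d, s, p, w) \<in> set_pmf \<Omega>"
      have "s k < N" using supp[OF om] k by (auto simp: PiE_dflt_def)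
      then have "s k * K + k < N * K" by (rule idx_lt[OF _ k])
      then show "real (C k (s k) p w) < 2 powr (M * real F)"
        using C0 wfv supp[OF om] by (auto simp: C_def)
    qed
    have c2: "\<forall>(d, s, p, w)\<in>set_pmf \<Omega>. real (E w d p s) < 2 powr (R * real F) \<and> J d p s < card DV"
    proof (intro ballI, clarify)
      fix d s p w assume om: "(d, s, p, w) \<in> set_pmf \<Omega>"
      have "h (tvec N K d s) \<in> {0..<card DV}" using h tDV supp[OF om] by (auto simp: bij_betw_def)
      then show "real (E w d p s) < 2 powr (R * real F) \<and> J d p s < card DV"
        using E0 wfv supp[OF om] dvv by (auto simp: E_def J_def)
    qed
    have c3: "\<forall>k<K. \<forall>\<omega>\<in>set_pmf \<Omega>. case \<omega> of (d, s, p, w) \<Rightarrow>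
            Dec k (d k) (s k) ((\<lambda>(d, s, p, w). (E w d p s, J d p s)) \<omega>)
              ((\<lambda>k (d, s, p, w). (C k (s k) p w, s k)) k \<omega>) = w (d k)"
    proof (intro allI impI ballI, clarify)
      fix k d s p w assume k: "k < K" and om: "(d, s, p, w) \<in> set_pmf \<Omega>"
      note sp = supp[OF om]
      have sk: "s k < N" and dk: "d k < N" using sp k by (auto simp: PiE_dflt_def)
      have idx: "s k * K + k < N * K" by (rule idx_lt[OF sk k])
      have inv: "inv_into DV h (h (tvec N K d s)) = tvec N K d s"
        using h tDV sp by (auto simp: bij_betw_def)
      have dvk: "dv N K (tvec N K d s) (s k * K + k) = d k"
        using idx k sk dk assms by (simp add: dv_def tvec_def dec_arith)
      have dtyp: "dv N K (tvec N K d s) \<in> demand_type_set N (N * K) (\<lambda>_. K)"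
        using assms tlt by (intro dv_type) auto
      have "G (s k * K + k) (dv N K (tvec N K d s)) (E0 (restrict w {..<N}) (dv N K (tvec N K d s)))
           (C0 (s k * K + k) (restrict w {..<N})) = restrict w {..<N} (dv N K (tvec N K d s) (s k * K + k))"
        using G wfv sp dvv idx dtyp by blast
      then show "Dec k (d k) (s k) (E w d p s, J d p s) (C k (s k) p w, s k) = w (d k)"
        by (simp add: Dec_def E_def J_def C_def inv dvk dk)
    qed
    have c4: "\<forall>k<K. mutual_info \<Omega>
            (\<lambda>(d, s, p, w). restrict d ({..<K} - {k}))
            (\<lambda>\<omega>. ((\<lambda>k (d, s, p, w). (C k (s k) p w, s k)) k \<omega>,
                  (\<lambda>(d, s, p, w). (E w d p s, J d p s)) \<omega>, fst \<omega> k)) = 0"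
    proof (intro allI impI)
      fix k assume k: "k < K"
      define \<Phi> where "\<Phi> (w::nat\<Rightarrow>nat) (sk::nat) (dk::nat) t = ((C0 (sk * K + k) (restrict w {..<N}), sk),
          (E0 (restrict w {..<N}) (dv N K t), h t), dk)" for w sk dk t
      obtain P Q where PQ: "map_pmf (\<lambda>(d, s, p, w). (restrict d ({..<K} - {k}), \<Phi> w (s k) (d k) (tvec N K d s)))
         (private_space N K F (\<lambda>_. pmf_of_set {..<N}) (return_pmf 0)) = pair_pmf P Q"
        using indep_main[OF k assms(1)] by blast
      show "mutual_info \<Omega>
            (\<lambda>(d, s, p, w). restrict d ({..<K} - {k}))
            (\<lambda>\<omega>. ((\<lambda>k (d, s, p, w). (C k (s k) p w, s k)) k \<omega>,
                  (\<lambda>(d, s, p, w). (E w d p s, J d p s)) \<omega>, fst \<omega> k)) = 0"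
        apply (rule mi_zero[where P=P and Q=Q])
        apply (subst PQ[symmetric])
        apply (simp add: \<Omega>_def pS_def pP_def)
        apply (intro map_pmf_cong refl)
        apply (auto simp: \<Phi>_def C_def E_def J_def split: prod.splits)
        done
    qed
    have fin: "(\<forall>k<K. finite (set_pmf (pS k))) \<and> finite (set_pmf pP)"
      using assms by (simp add: pS_def pP_def lessThan_empty_iff)
    show "private_scheme N K M R F (card DV)"
      unfolding private_scheme_def Let_def
      apply (rule exI[where x=pS], rule exI[where x=pP], rule exI[where x=C], rule exI[where x=E],
             rule exI[where x=J], rule exI[where x=Dec])
      using fin c1 c2 c3 c4 unfolding \<Omega>_def by blast
  qed
qed


end
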